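(* $\displaystyle\sup_{\varphi\in\mathcal F}\int_{\mathbb R^d}\varphi(x)\,dx=\frac{\mathrm{vol}(B)}{2^d\delta}.$
   Context: $\|\cdot\|$ is a norm on $\mathbb R^d$, $B=\{x:\|x\|<1\}$. For $K>0$ let $N(K)$ be the maximum number of pairwise disjoint translates of $B$ with centres in $(0,K)^d$; $\delta:=\lim_{K\to\infty}N(K)\mathrm{vol}(B)/K^d$ is the packing density. A set $S$ is well-spread if $\|v-w\|>1$ for all distinct $v,w\in S$; a nonnegative measurable $\varphi$ is feasible if $\sum_{v\in S}\varphi(v)\le1$ for every well-spread $S$; $\mathcal F$ is the set of feasible functions. *)

theory Defs
  imports "HOL-Analysis.Analysis"
begin

text \<open>A norm on R^d, given as a function (not necessarily the Euclidean one).\<close>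
definition is_norm :: "(real^'d \<Rightarrow> real) \<Rightarrow> bool" where
  "is_norm nrm \<longleftrightarrow>
     (\<forall>x y. nrm (x + y) \<le> nrm x + nrm y) \<and>
     (\<forall>c x. nrm (c *\<^sub>R x) = \<bar>c\<bar> * nrm x) \<and>
     (\<forall>x. nrm x = 0 \<longleftrightarrow> x = 0)"

definition unit_ball :: "(real^'d \<Rightarrow> real) \<Rightarrow> (real^'d) set" where
  "unit_ball nrm = {x. nrm x < 1}"

definition max_packing :: "(real^'d \<Rightarrow> real) \<Rightarrow> real \<Rightarrow> nat" where
  "max_packing nrm K = Max {card C | C.
      finite C \<and> C \<subseteq> {x. \<forall>i. 0 < x $ i \<and> x $ i < K} \<and>
      (\<forall>c\<in>C. \<forall>c'\<in>C. c \<noteq> c' \<longrightarrow>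
          ((+) c ` unit_ball nrm) \<inter> ((+) c' ` unit_ball nrm) = {})}"

definition packing_density :: "(real^'d \<Rightarrow> real) \<Rightarrow> real" where
  "packing_density nrm =
     Lim at_top (\<lambda>K::real. real (max_packing nrm K) * measure lborel (unit_ball nrm)
                            / K ^ CARD('d))"

definition well_spread :: "(real^'d \<Rightarrow> real) \<Rightarrow> (real^'d) set \<Rightarrow> bool" where
  "well_spread nrm S \<longleftrightarrow> (\<forall>v\<in>S. \<forall>w\<in>S. v \<noteq> w \<longrightarrow> nrm (v - w) > 1)"

definition feasible :: "(real^'d \<Rightarrow> real) \<Rightarrow> (real^'d \<Rightarrow> real) \<Rightarrow> bool" where
  "feasible nrm \<phi> \<longleftrightarrow>
     (\<forall>x. 0 \<le> \<phi> x) \<and> \<phi> \<in> borel_measurable lebesgue \<and>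
     (\<forall>S. well_spread nrm S \<longrightarrow> (\<Sum>\<^sub>\<infinity>v\<in>S. ennreal (\<phi> v)) \<le> 1)"

end

theory Submission
  imports Defs
begin


locale nrm_loc =
  fixes nrm :: "real^'d \<Rightarrow> real"
  assumes isn: "is_norm nrm"
begin

lemma tri: "nrm (x + y) \<le> nrm x + nrm y" using isn unfolding is_norm_def by blast
lemma hom: "nrm (c *\<^sub>R x) = \<bar>c\<bar> * nrm x" using isn unfolding is_norm_def by blast
lemma zero_iff: "nrm x = 0 \<longleftrightarrow> x = 0" using isn unfolding is_norm_def by blast
lemma nrm0[simp]: "nrm 0 = 0" using zero_iff by simp
lemma nrm_neg: "nrm (- x) = nrm x" using hom[of "-1" x] by simp
lemma nrm_commute: "nrm (x - y) = nrm (y - x)" using nrm_neg[of "x - y"] by simp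
lemma nrm_nonneg: "0 \<le> nrm x"
proof -
  have "nrm 0 \<le> nrm x + nrm (- x)" using tri[of x "-x"] by simp
  then show ?thesis using nrm_neg[of x] by simp
qed
lemma tri_diff: "nrm (x - z) \<le> nrm (x - y) + nrm (y - z)"
  using tri[of "x - y" "y - z"] by simp

lemma nrm_sum: "finite A \<Longrightarrow> nrm (sum f A) \<le> (\<Sum>i\<in>A. nrm (f i))"
  by (induction A rule: finite_induct) (auto intro: order_trans[OF tri])

definition "bN = (\<Sum>i\<in>UNIV. nrm (axis i (1::real) :: real^'d))"

lemma nrm_upper: "nrm x \<le> bN * norm x"
proof -
  have "x = (\<Sum>i\<in>UNIV. x $ i *\<^sub>R axis i 1)"
    using basis_expansion[of x] by (simp add: scalar_mult_eq_scaleR)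
  then have "nrm x \<le> (\<Sum>i\<in>UNIV. nrm (x $ i *\<^sub>R axis i (1::real)))"
    by (metis finite nrm_sum)
  also have "\<dots> = (\<Sum>i\<in>UNIV. \<bar>x $ i\<bar> * nrm (axis i (1::real)))" by (simp add: hom)
  also have "\<dots> \<le> (\<Sum>i\<in>UNIV. norm x * nrm (axis i (1::real)))"
    by (intro sum_mono mult_right_mono) (auto simp: component_le_norm_cart nrm_nonneg)
  finally show ?thesis by (simp add: bN_def sum_distrib_left mult.commute)
qed

lemma bN_nonneg: "0 \<le> bN" unfolding bN_def by (intro sum_nonneg nrm_nonneg)

lemma nrm_lip: "\<bar>nrm x - nrm y\<bar> \<le> bN * norm (x - y)"
proof -
  have "nrm x \<le> nrm y + nrm (x - y)" using tri[of y "x - y"] by simp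
  moreover have "nrm y \<le> nrm x + nrm (y - x)" using tri[of x "y - x"] by simp
  moreover have "nrm (x - y) \<le> bN * norm (x - y)" "nrm (y - x) \<le> bN * norm (x - y)"
    using nrm_upper[of "x - y"] nrm_upper[of "y - x"] by (auto simp: norm_minus_commute)
  ultimately show ?thesis by linarith
qed

lemma nrm_cont: "continuous_on UNIV nrm"
proof (rule continuous_onI)
  fix x and e :: real assume e: "0 < e"
  show "\<exists>d>0. \<forall>x'\<in>UNIV. dist x' x < d \<longrightarrow> dist (nrm x') (nrm x) \<le> e"
  proof (intro exI[of _ "e / (bN + 1)"] conjI ballI impI)
    show "0 < e / (bN + 1)" using e bN_nonneg by simp
    fix y assume "dist y x < e / (bN + 1)"
    then have "norm (y - x) * (bN + 1) < e" using bN_nonneg by (simp add: dist_norm field_simps)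
    moreover have "bN * norm (y - x) \<le> norm (y - x) * (bN + 1)"
      by (simp add: algebra_simps)
    ultimately have "bN * norm (y - x) \<le> e" by linarith
    then show "dist (nrm y) (nrm x) \<le> e" using nrm_lip[of y x] by (simp add: dist_real_def)
  qed
qed

lemma nrm_lower_ex: "\<exists>a>0. \<forall>x. a * norm x \<le> nrm x"
proof -
  have "compact (sphere (0::real^'d) 1)" by simp
  moreover have "sphere (0::real^'d) 1 \<noteq> {}" by simp
  moreover have "continuous_on (sphere 0 1) nrm" using nrm_cont continuous_on_subset by blast
  ultimately obtain z where z: "z \<in> sphere 0 1" "\<forall>y\<in>sphere 0 1. nrm z \<le> nrm y"
    using continuous_attains_inf by blast
  have "z \<noteq> 0" using z by auto
  then have a: "nrm z > 0" using zero_iff nrm_nonneg[of z] by (simp add: order_le_less)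
  show ?thesis
  proof (intro exI[of _ "nrm z"] conjI allI)
    fix x :: "real^'d"
    show "nrm z * norm x \<le> nrm x"
    proof (cases "x = 0")
      case False
      then have "(inverse (norm x)) *\<^sub>R x \<in> sphere 0 1" by simp
      then have "nrm z \<le> nrm ((inverse (norm x)) *\<^sub>R x)" using z by blast
      also have "\<dots> = nrm x / norm x" by (simp add: hom field_simps)
      finally show ?thesis using False by (simp add: field_simps)
    qed simp
  qed (use a in auto)
qed

definition "aN = (SOME a. a > 0 \<and> (\<forall>x. a * norm x \<le> nrm x))"
lemma aN: "aN > 0" "aN * norm x \<le> nrm x"
  using someI_ex[OF nrm_lower_ex[unfolded Ex_def[symmetric]]] nrm_lower_ex
  unfolding aN_def by (metis (mono_tags, lifting) someI_ex)+

lemma nrm_comp: "aN * \<bar>x $ i\<bar> \<le> nrm x"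
  using aN(2)[of x] aN(1) component_le_norm_cart[of x i]
  by (meson mult_left_mono order.trans less_imp_le)

lemma disj_iff: "((+) c ` unit_ball nrm \<inter> (+) c' ` unit_ball nrm = {}) \<longleftrightarrow> 2 \<le> nrm (c - c')"
proof
  assume d: "(+) c ` unit_ball nrm \<inter> (+) c' ` unit_ball nrm = {}"
  show "2 \<le> nrm (c - c')"
  proof (rule ccontr)
    assume "\<not> 2 \<le> nrm (c - c')"
    then have lt: "nrm (c - c') < 2" by simp
    define z where "z = c + (1/2) *\<^sub>R (c' - c)"
    have u1: "(1/2) *\<^sub>R (c' - c) \<in> unit_ball nrm" and u2: "(1/2) *\<^sub>R (c - c') \<in> unit_ball nrm"
      using lt nrm_commute[of c c'] by (auto simp: unit_ball_def hom)
    have ze: "z = c' + (1/2) *\<^sub>R (c - c')" unfolding z_def by (simp add: vec_eq_iff field_simps)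
    have "z \<in> (+) c ` unit_ball nrm" unfolding z_def by (rule imageI[OF u1])
    moreover have "z \<in> (+) c' ` unit_ball nrm" unfolding ze by (rule imageI[OF u2])
    ultimately show False using d by blast
  qed
next
  assume le: "2 \<le> nrm (c - c')"
  show "(+) c ` unit_ball nrm \<inter> (+) c' ` unit_ball nrm = {}"
  proof (rule ccontr)
    assume "(+) c ` unit_ball nrm \<inter> (+) c' ` unit_ball nrm \<noteq> {}"
    then obtain u u' where u: "nrm u < 1" "nrm u' < 1" "c + u = c' + u'"
      by (auto simp: unit_ball_def)
    then have "c - c' = u' - u" by (simp add: algebra_simps)
    then have "nrm (c - c') \<le> nrm u' + nrm u" using tri[of u' "- u"] nrm_neg[of u] by simp
    with u le show False by linarith
  qed
qed

end

lemma lebesgue_transl: "distr lebesgue lebesgue ((+) t) = (lebesgue :: ('a::euclidean_space) measure)"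
  and lebesgue_transl_meas: "((+) t) \<in> lebesgue \<rightarrow>\<^sub>M (lebesgue :: ('a::euclidean_space) measure)"
proof -
  have T: "(\<lambda>x::'a. t + (\<Sum>j\<in>Basis. (1 * (x \<bullet> j)) *\<^sub>R j)) = (+) t"
    by (simp add: euclidean_representation)
  show "distr lebesgue lebesgue ((+) t) = (lebesgue :: 'a measure)"
    using lebesgue_affine_euclidean[of "\<lambda>_. 1" t] unfolding T by (simp add: density_1)
  show "((+) t) \<in> lebesgue \<rightarrow>\<^sub>M (lebesgue :: 'a measure)"
    using lebesgue_affine_measurable[of "\<lambda>_. 1" t] unfolding T by simp
qed

lemma nn_integral_transl:
  fixes f :: "'a::euclidean_space \<Rightarrow> ennreal"
  assumes "f \<in> borel_measurable lebesgue"
  shows "(\<integral>\<^sup>+x. f (t + x) \<partial>lebesgue) = (\<integral>\<^sup>+x. f x \<partial>lebesgue)"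
proof -
  have "(\<integral>\<^sup>+x. f x \<partial>lebesgue) = (\<integral>\<^sup>+x. f x \<partial>distr lebesgue lebesgue ((+) t))"
    by (simp add: lebesgue_transl)
  also have "\<dots> = (\<integral>\<^sup>+x. f (t + x) \<partial>lebesgue)"
    by (rule nn_integral_distr[OF lebesgue_transl_meas]) (use assms in simp)
  finally show ?thesis by simp
qed

lemma transl_meas:
  fixes f :: "'a::euclidean_space \<Rightarrow> 'b::topological_space"
  assumes "f \<in> borel_measurable lebesgue"
  shows "(\<lambda>x. f (t + x)) \<in> borel_measurable lebesgue"
  using measurable_comp[OF lebesgue_transl_meas assms] by (simp add: o_def)




definition cube :: "real \<Rightarrow> real \<Rightarrow> (real^'d) set" where
  "cube l u = box (\<chi> i. l) (\<chi> i. u)"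

lemma mem_cube: "x \<in> cube l u \<longleftrightarrow> (\<forall>i. l < x $ i \<and> x $ i < u)"
  by (simp add: cube_def mem_box_cart)

lemma cube_sets[measurable]: "cube l u \<in> sets lebesgue"
  unfolding cube_def by (simp add: fmeasurableD)

lemma cube_borel[measurable]: "cube l u \<in> sets borel"
  unfolding cube_def by simp

lemma emeasure_cube:
  assumes "l \<le> u"
  shows "emeasure lebesgue (cube l u :: (real^'d) set) = ennreal ((u - l) ^ CARD('d))"
proof -
  have "emeasure lebesgue (cube l u :: (real^'d) set) = emeasure lborel (cube l u :: (real^'d) set)"
    unfolding cube_def by simp
  also have "\<dots> = (\<Prod>b\<in>(Basis :: (real^'d) set). ((\<chi> i. u) - (\<chi> i. l)) \<bullet> b)"
    unfolding cube_def using assms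
    by (subst emeasure_lborel_box) (auto simp: Basis_vec_def inner_axis)
  also have "\<dots> = (\<Prod>b\<in>(Basis :: (real^'d) set). (u - l))"
    by (intro arg_cong[where f=ennreal] prod.cong) (auto simp: Basis_vec_def inner_axis)
  also have "\<dots> = ennreal ((u - l) ^ CARD('d))"
    using assms by (simp add: prod_constant)
  finally show ?thesis .
qed

context nrm_loc begin

lemma feasible_sum:
  assumes f: "feasible nrm \<phi>" and S: "finite S" "well_spread nrm S"
  shows "(\<Sum>s\<in>S. ennreal (\<phi> (s + x))) \<le> 1"
proof -
  have ws: "well_spread nrm ((\<lambda>s. s + x) ` S)"
    using S(2) unfolding well_spread_def by auto
  have "(\<Sum>\<^sub>\<infinity>v\<in>(\<lambda>s. s + x) ` S. ennreal (\<phi> v)) \<le> 1"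
    using f ws unfolding feasible_def by blast
  also have "(\<Sum>\<^sub>\<infinity>v\<in>(\<lambda>s. s + x) ` S. ennreal (\<phi> v)) = (\<Sum>v\<in>(\<lambda>s. s + x) ` S. ennreal (\<phi> v))"
    using S by simp
  also have "\<dots> = (\<Sum>s\<in>S. ennreal (\<phi> (s + x)))"
    by (subst sum.reindex) (auto simp: inj_on_def)
  finally show ?thesis .
qed

lemma avg:
  assumes f: "feasible nrm \<phi>" and S: "finite S" "well_spread nrm S"
    and Sb: "\<And>s i. s \<in> S \<Longrightarrow> 0 \<le> s $ i \<and> s $ i \<le> W" and W: "0 \<le> W" and r: "0 \<le> r"
  shows "of_nat (card S) * (\<integral>\<^sup>+x. ennreal (\<phi> x) * indicator (cube (-r) r) x \<partial>lebesgue)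
          \<le> ennreal ((2*r + W) ^ CARD('d))"
proof -
  define A :: "(real^'d) set" where "A = cube (-r-W) r"
  have phim[measurable]: "\<phi> \<in> borel_measurable lebesgue" using f unfolding feasible_def by blast
  have Am[measurable]: "A \<in> sets lebesgue" unfolding A_def by simp
  have step: "(\<integral>\<^sup>+x. ennreal (\<phi> x) * indicator (cube (-r) r) x \<partial>lebesgue)
       \<le> (\<integral>\<^sup>+x. ennreal (\<phi> (s + x)) * indicator A x \<partial>lebesgue)" if s: "s \<in> S" for s
  proof -
    have "(\<integral>\<^sup>+x. ennreal (\<phi> x) * indicator (cube (-r) r) x \<partial>lebesgue)
       \<le> (\<integral>\<^sup>+x. ennreal (\<phi> x) * indicator A (-s + x) \<partial>lebesgue)"
    proof (intro nn_integral_mono)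
      fix x :: "real^'d"
      have "x \<in> cube (-r) r \<Longrightarrow> -s + x \<in> A"
        using Sb[OF s] unfolding A_def mem_cube by (auto simp: algebra_simps) (smt (verit))+
      then show "ennreal (\<phi> x) * indicator (cube (-r) r) x \<le> ennreal (\<phi> x) * indicator A (-s + x)"
        by (auto simp: indicator_def)
    qed
    also have "\<dots> = (\<integral>\<^sup>+x. ennreal (\<phi> (s + x)) * indicator A (-s + (s + x)) \<partial>lebesgue)"
    proof (rule nn_integral_transl[symmetric])
      have "(\<lambda>x. indicator A (-s + x) :: ennreal) \<in> borel_measurable lebesgue"
        by (rule transl_meas) simp
      then show "(\<lambda>x. ennreal (\<phi> x) * indicator A (-s + x)) \<in> borel_measurable lebesgue"
        by measurable
    qed
    also have "\<dots> = (\<integral>\<^sup>+x. ennreal (\<phi> (s + x)) * indicator A x \<partial>lebesgue)" by simp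
    finally show ?thesis .
  qed
  have meas_s: "(\<lambda>x. ennreal (\<phi> (s + x)) * indicator A x) \<in> borel_measurable lebesgue" for s
  proof -
    have "(\<lambda>x. \<phi> (s + x)) \<in> borel_measurable lebesgue" by (rule transl_meas) simp
    then show ?thesis by measurable
  qed
  have "of_nat (card S) * (\<integral>\<^sup>+x. ennreal (\<phi> x) * indicator (cube (-r) r) x \<partial>lebesgue)
     = (\<Sum>s\<in>S. (\<integral>\<^sup>+x. ennreal (\<phi> x) * indicator (cube (-r) r) x \<partial>lebesgue))" by simp
  also have "\<dots> \<le> (\<Sum>s\<in>S. (\<integral>\<^sup>+x. ennreal (\<phi> (s + x)) * indicator A x \<partial>lebesgue))"
    by (intro sum_mono step)
  also have "\<dots> = (\<integral>\<^sup>+x. (\<Sum>s\<in>S. ennreal (\<phi> (s + x)) * indicator A x) \<partial>lebesgue)"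
    by (rule nn_integral_sum[symmetric]) (rule meas_s)
  also have "\<dots> \<le> (\<integral>\<^sup>+x. indicator A x \<partial>lebesgue)"
  proof (intro nn_integral_mono)
    fix x
    have "(\<Sum>s\<in>S. ennreal (\<phi> (s + x)) * indicator A x) = (\<Sum>s\<in>S. ennreal (\<phi> (s + x))) * indicator A x"
      by (simp add: sum_distrib_right)
    also have "\<dots> \<le> 1 * indicator A x"
      by (intro mult_right_mono feasible_sum[OF f S]) simp
    finally show "(\<Sum>s\<in>S. ennreal (\<phi> (s + x)) * indicator A x) \<le> indicator A x" by simp
  qed
  also have "\<dots> = emeasure lebesgue A" by simp
  also have "\<dots> = ennreal ((2*r + W) ^ CARD('d))"
    unfolding A_def using W r by (subst emeasure_cube) (auto simp: algebra_simps)
  finally show ?thesis .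
qed

end




context nrm_loc begin

definition "epsN = 1 / (2 * real CARD('d) * (bN + 1))"

lemma epsN_pos: "epsN > 0" unfolding epsN_def using bN_nonneg by simp

lemma small_cube: 
  assumes "x \<in> cube (-epsN) epsN" "y \<in> cube (-epsN) epsN"
  shows "nrm (x - y) < 1"
proof -
  have "\<bar>(x - y) $ i\<bar> < 2 * epsN" for i
  proof -
    from assms have "-epsN < x$i \<and> x$i < epsN \<and> -epsN < y$i \<and> y$i < epsN" unfolding mem_cube by blast
    then show ?thesis by (simp add: abs_less_iff)
  qed
  then have "(\<Sum>i\<in>UNIV. \<bar>(x - y) $ i\<bar>) < (\<Sum>i\<in>(UNIV::'d set). 2 * epsN)"
    by (intro sum_strict_mono) auto
  then have "norm (x - y) < real CARD('d) * (2 * epsN)"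
    using norm_le_l1_cart[of "x - y"] by simp
  then have "(bN + 1) * norm (x - y) < (bN + 1) * (real CARD('d) * (2 * epsN))"
    using bN_nonneg by (intro mult_strict_left_mono) auto
  also have "(bN + 1) * (real CARD('d) * (2 * epsN)) = 1" unfolding epsN_def using bN_nonneg by simp
  finally have "(bN + 1) * norm (x - y) < 1" .
  moreover have "bN * norm (x - y) \<le> (bN + 1) * norm (x - y)" by (simp add: algebra_simps)
  ultimately show ?thesis using nrm_upper[of "x - y"] by linarith
qed

lemma feasible_small: "feasible nrm (indicator (cube (-epsN) epsN))"
  unfolding feasible_def
proof (intro conjI allI impI)
  let ?E = "cube (-epsN) epsN :: (real^'d) set"
  show "indicator ?E \<in> borel_measurable lebesgue" by simp
  show "0 \<le> (indicator ?E x :: real)" for x by simp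
  fix S assume ws: "well_spread nrm S"
  have sub: "card (S \<inter> ?E) \<le> 1" and fin: "finite (S \<inter> ?E)"
  proof -
    have ss: "\<forall>x\<in>S \<inter> ?E. \<forall>y\<in>S \<inter> ?E. x = y"
    proof (intro ballI)
      fix x y assume "x \<in> S \<inter> ?E" "y \<in> S \<inter> ?E"
      then have "x \<in> S" "y \<in> S" "nrm (x - y) < 1" using small_cube by auto
      then show "x = y" using ws unfolding well_spread_def by force
    qed
    have "card (S \<inter> ?E) \<le> 1 \<and> finite (S \<inter> ?E)"
    proof (cases "S \<inter> ?E = {}")
      case False
      then obtain a where a: "a \<in> S \<inter> ?E" by blast
      then have "S \<inter> ?E = {a}" using ss by blast
      then show ?thesis by simp
    qed simp
    then show "card (S \<inter> ?E) \<le> 1" "finite (S \<inter> ?E)" by auto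
  qed
  have "(\<Sum>\<^sub>\<infinity>v\<in>S. ennreal (indicator ?E v)) = (\<Sum>\<^sub>\<infinity>v\<in>S \<inter> ?E. 1)"
    by (rule infsum_cong_neutral) (auto simp: indicator_def)
  also have "\<dots> = of_nat (card (S \<inter> ?E))" using fin by simp
  also have "\<dots> \<le> 1" using sub by simp
  finally show "(\<Sum>\<^sub>\<infinity>v\<in>S. ennreal (indicator ?E v)) \<le> 1" .
qed

lemma card_ws_bound:
  assumes S: "finite S" "well_spread nrm S"
    and Sb: "\<And>s i. s \<in> S \<Longrightarrow> 0 \<le> s $ i \<and> s $ i \<le> W" and W: "0 \<le> W"
  shows "real (card S) \<le> ((2 * epsN + W) / (2 * epsN)) ^ CARD('d)"
proof -
  let ?E = "cube (-epsN) epsN :: (real^'d) set"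
  have "of_nat (card S) * (\<integral>\<^sup>+x. ennreal (indicator ?E x) * indicator ?E x \<partial>lebesgue)
          \<le> ennreal ((2*epsN + W) ^ CARD('d))"
    by (rule avg[OF feasible_small S Sb W]) (use epsN_pos in auto)
  also have "(\<integral>\<^sup>+x. ennreal (indicator ?E x) * indicator ?E x \<partial>lebesgue) = (\<integral>\<^sup>+x. indicator ?E x \<partial>lebesgue)"
    by (intro nn_integral_cong) (auto simp: indicator_def)
  also have "\<dots> = emeasure lebesgue ?E"
    by (rule nn_integral_indicator) simp
  also have "\<dots> = ennreal ((2 * epsN) ^ CARD('d))" using epsN_pos by (subst emeasure_cube) auto
  finally have "ennreal (real (card S) * (2 * epsN) ^ CARD('d)) \<le> ennreal ((2*epsN + W) ^ CARD('d))"
    using epsN_pos by (simp add: ennreal_mult' ennreal_of_nat_eq_real_of_nat)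
  then have "real (card S) * (2 * epsN) ^ CARD('d) \<le> (2*epsN + W) ^ CARD('d)"
    using W epsN_pos by (subst (asm) ennreal_le_iff) auto
  then show ?thesis using epsN_pos by (simp add: field_simps power_divide)
qed

end



context nrm_loc begin

definition "packing K C \<longleftrightarrow> finite C \<and> C \<subseteq> {x. \<forall>i. 0 < x $ i \<and> x $ i < K} \<and>
   (\<forall>c\<in>C. \<forall>c'\<in>C. c \<noteq> c' \<longrightarrow> 2 \<le> nrm (c - c'))"

lemma max_packing_alt: "max_packing nrm K = Max {card C | C. packing K C}"
  unfolding max_packing_def packing_def disj_iff ..

lemma packing_ws: "packing K C \<Longrightarrow> well_spread nrm C"
  unfolding packing_def well_spread_def by force

lemma packing_card_le:
  assumes "packing K C"
  shows "real (card C) \<le> ((2 * epsN + \<bar>K\<bar>) / (2 * epsN)) ^ CARD('d)"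
proof (rule card_ws_bound)
  fix s i assume "s \<in> C"
  then have "0 < s $ i \<and> s $ i < K" using assms unfolding packing_def by blast
  then show "0 \<le> s $ i \<and> s $ i \<le> \<bar>K\<bar>" by auto
qed (use assms in \<open>auto simp: packing_def intro: packing_ws\<close>)

lemma cards_finite: "finite {card C | C. packing K C}"
proof -
  define B where "B = ((2 * epsN + \<bar>K\<bar>) / (2 * epsN)) ^ CARD('d)"
  have "{card C | C. packing K C} \<subseteq> {..nat \<lceil>B\<rceil>}"
  proof
    fix k assume "k \<in> {card C | C. packing K C}"
    then obtain C where "packing K C" "k = card C" by blast
    then have "real k \<le> B" using packing_card_le unfolding B_def by blast
    then show "k \<in> {..nat \<lceil>B\<rceil>}" by (simp add: le_nat_iff le_ceiling_iff)
  qed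
  then show ?thesis using finite_subset by blast
qed

lemma N_ge: "packing K C \<Longrightarrow> card C \<le> max_packing nrm K"
  unfolding max_packing_alt by (rule Max_ge[OF cards_finite]) blast

lemma N_ex: "\<exists>C. packing K C \<and> card C = max_packing nrm K"
proof -
  have "packing K {}" by (simp add: packing_def)
  then have "{card C | C. packing K C} \<noteq> {}" by blast
  from Max_in[OF cards_finite this] show ?thesis unfolding max_packing_alt by auto
qed

lemma N_pos: "0 < K \<Longrightarrow> 1 \<le> max_packing nrm K"
proof -
  assume K: "0 < K"
  have "packing K {(\<chi> i. K / 2)}" using K by (simp add: packing_def)
  from N_ge[OF this] show ?thesis by simp
qed

abbreviation "sig \<equiv> (SUP \<phi>\<in>{\<phi>. feasible nrm \<phi>}. \<integral>\<^sup>+ x. ennreal (\<phi> x) \<partial>lebesgue)"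

lemma lower:
  assumes K: "0 < K"
  shows "ennreal ((K/2) ^ CARD('d) / real (max_packing nrm K)) \<le> sig"
proof -
  define N where "N = max_packing nrm K"
  define L where "L = K / 2"
  have N1: "1 \<le> N" unfolding N_def using N_pos[OF K] .
  have L: "0 < L" using K unfolding L_def by simp
  let ?Q = "cube 0 L :: (real^'d) set"
  define \<phi> where "\<phi> = (\<lambda>x. (1 / real N) * indicator ?Q x)"
  have fe: "feasible nrm \<phi>"
    unfolding feasible_def
  proof (intro conjI allI impI)
    show "0 \<le> \<phi> x" for x unfolding \<phi>_def by simp
    show "\<phi> \<in> borel_measurable lebesgue" unfolding \<phi>_def by simp
    fix S assume ws: "well_spread nrm S"
    have fc: "finite (S \<inter> ?Q) \<and> card (S \<inter> ?Q) \<le> N"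
    proof (rule finite_if_finite_subsets_card_bdd)
      fix F assume F: "F \<subseteq> S \<inter> ?Q" "finite F"
      have inj: "inj_on (\<lambda>s. 2 *\<^sub>R s) F" by (auto simp: inj_on_def)
      have "packing K ((\<lambda>s. 2 *\<^sub>R s) ` F)"
        unfolding packing_def
      proof (intro conjI ballI impI)
        show "finite ((\<lambda>s. 2 *\<^sub>R s) ` F)" using F by simp
        show "(\<lambda>s. 2 *\<^sub>R s) ` F \<subseteq> {x. \<forall>i. 0 < x $ i \<and> x $ i < K}"
        proof (safe)
          fix s i assume "s \<in> F"
          then have "s \<in> cube 0 L" using F by blast
          then have "0 < s $ i \<and> s $ i < L" unfolding mem_cube by blast
          then show "0 < (2 *\<^sub>R s) $ i" "(2 *\<^sub>R s) $ i < K" unfolding L_def by auto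
        qed
        fix c c' assume "c \<in> (\<lambda>s. 2 *\<^sub>R s) ` F" "c' \<in> (\<lambda>s. 2 *\<^sub>R s) ` F" "c \<noteq> c'"
        then obtain s s' where ss: "s \<in> F" "s' \<in> F" "c = 2 *\<^sub>R s" "c' = 2 *\<^sub>R s'" "s \<noteq> s'" by auto
        then have "1 < nrm (s - s')" using ws F unfolding well_spread_def by blast
        moreover have "c - c' = 2 *\<^sub>R (s - s')" using ss by (simp add: scaleR_diff_right)
        ultimately show "2 \<le> nrm (c - c')" by (simp add: hom)
      qed
      from N_ge[OF this] show "card F \<le> N" using card_image[OF inj] unfolding N_def by simp
    qed
    have "(\<Sum>\<^sub>\<infinity>v\<in>S. ennreal (\<phi> v)) = (\<Sum>\<^sub>\<infinity>v\<in>S \<inter> ?Q. ennreal (1 / real N))"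
      by (rule infsum_cong_neutral) (auto simp: \<phi>_def indicator_def)
    also have "\<dots> = of_nat (card (S \<inter> ?Q)) * ennreal (1 / real N)" using fc by simp
    also have "\<dots> \<le> of_nat N * ennreal (1 / real N)"
      using fc by (intro mult_right_mono) auto
    also have "\<dots> = 1" using N1
      by (simp add: ennreal_of_nat_eq_real_of_nat ennreal_mult'[symmetric])
    finally show "(\<Sum>\<^sub>\<infinity>v\<in>S. ennreal (\<phi> v)) \<le> 1" .
  qed
  have "(\<integral>\<^sup>+ x. ennreal (\<phi> x) \<partial>lebesgue) = (\<integral>\<^sup>+ x. ennreal (1 / real N) * indicator ?Q x \<partial>lebesgue)"
    by (intro nn_integral_cong) (auto simp: \<phi>_def indicator_def)
  also have "\<dots> = ennreal (1 / real N) * emeasure lebesgue ?Q"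
    by (rule nn_integral_cmult_indicator) simp
  also have "\<dots> = ennreal (L ^ CARD('d) / real N)"
    using L by (subst emeasure_cube) (auto simp: ennreal_mult'[symmetric])
  finally have "ennreal (L ^ CARD('d) / real N) \<le> sig"
    using fe by (metis (mono_tags, lifting) SUP_upper mem_Collect_eq)
  then show ?thesis unfolding L_def N_def .
qed

lemma sep_coord:
  fixes a b K h P :: real and u v :: nat
  assumes "0 < a" "a < K" "0 < b" "b < K" "u \<noteq> v" "P = K + h" "0 < h"
  shows "h < \<bar>a - b + P * (real u - real v)\<bar>"
proof (cases "u < v")
  case True
  then have "real u - real v \<le> -1" by linarith
  then have "P * (real u - real v) \<le> P * (-1)" using assms by (intro mult_left_mono) auto
  then show ?thesis using assms by linarith
next
  case False
  then have "real u - real v \<ge> 1" using assms by linarith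
  then have "P * (real u - real v) \<ge> P * 1" using assms by (intro mult_left_mono) auto
  then show ?thesis using assms by linarith
qed

definition "hN = 2 / aN"

lemma hN_pos: "0 < hN" unfolding hN_def using aN(1) by simp

lemma grid:
  assumes C: "packing K C" and K: "0 < K" and m: "1 \<le> m" and mu: "1 < \<mu>"
  defines "P \<equiv> K + hN"
  defines "F \<equiv> (\<lambda>(c, f). (\<mu>/2) *\<^sub>R (c + P *\<^sub>R (\<chi> i. real (f i))))"
  defines "X \<equiv> C \<times> (PiE (UNIV :: 'd set) (\<lambda>_. {..<m}))"
  shows "finite (F ` X)" "card (F ` X) = card C * m ^ CARD('d)" "well_spread nrm (F ` X)"
    "\<And>t i. t \<in> F ` X \<Longrightarrow> 0 \<le> t $ i \<and> t $ i \<le> \<mu> * real m * P / 2"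
proof -
  have Cf: "finite C" and Cb: "\<And>c i. c \<in> C \<Longrightarrow> 0 < c $ i \<and> c $ i < K"
    and Cd: "\<And>c c'. c \<in> C \<Longrightarrow> c' \<in> C \<Longrightarrow> c \<noteq> c' \<Longrightarrow> 2 \<le> nrm (c - c')"
    using C unfolding packing_def by auto
  have P: "P = K + hN" "0 < P" using K hN_pos unfolding P_def by auto
  have Xf: "finite X" unfolding X_def using Cf by (simp add: finite_PiE)
  have cardX: "card X = card C * m ^ CARD('d)"
    unfolding X_def by (simp add: card_cartesian_product card_PiE)
  have key: "1 < nrm (F x - F y)" if xy: "x \<in> X" "y \<in> X" "x \<noteq> y" for x y
  proof -
    obtain c f c' f' where xe: "x = (c, f)" and ye: "y = (c', f')" by fastforce
    have cC: "c \<in> C" "c' \<in> C" and fP: "f \<in> PiE UNIV (\<lambda>_. {..<m})" "f' \<in> PiE UNIV (\<lambda>_. {..<m})"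
      using xy unfolding xe ye X_def by auto
    have diff: "F x - F y = (\<mu>/2) *\<^sub>R ((c - c') + P *\<^sub>R ((\<chi> i. real (f i)) - (\<chi> i. real (f' i))))"
      unfolding xe ye F_def by (simp add: algebra_simps)
    show ?thesis
    proof (cases "f = f'")
      case True
      then have "c \<noteq> c'" using xy xe ye by auto
      then have "2 \<le> nrm (c - c')" using Cd cC by blast
      moreover have "F x - F y = (\<mu>/2) *\<^sub>R (c - c')" using diff True by simp
      ultimately have "\<mu> / 2 * 2 \<le> nrm (F x - F y)" using mu by (simp add: hom)
      then show ?thesis using mu by linarith
    next
      case False
      then obtain i where i: "f i \<noteq> f' i" by blast
      have "hN < \<bar>c $ i - c' $ i + P * (real (f i) - real (f' i))\<bar>"
        by (rule sep_coord) (use Cb[OF cC(1)] Cb[OF cC(2)] i P hN_pos in auto)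
      also have "c $ i - c' $ i + P * (real (f i) - real (f' i))
          = ((c - c') + P *\<^sub>R ((\<chi> i. real (f i)) - (\<chi> i. real (f' i)))) $ i" by simp
      finally have "hN * (\<mu>/2) < \<bar>(F x - F y) $ i\<bar>" using diff mu
        by (simp add: abs_mult)
      then have "aN * (hN * (\<mu>/2)) < aN * \<bar>(F x - F y) $ i\<bar>"
        using aN(1) by (intro mult_strict_left_mono) auto
      also have "aN * (hN * (\<mu>/2)) = \<mu>" unfolding hN_def using aN(1) by simp
      finally show ?thesis using nrm_comp[of "F x - F y" i] mu by linarith
    qed
  qed
  have inj: "inj_on F X"
  proof (rule inj_onI)
    fix x y assume "x \<in> X" "y \<in> X" "F x = F y"
    then show "x = y" using key[of x y] mu by (cases "x = y") auto
  qed
  show "finite (F ` X)" using Xf by simp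
  show "card (F ` X) = card C * m ^ CARD('d)" using card_image[OF inj] cardX by simp
  show "well_spread nrm (F ` X)"
    unfolding well_spread_def
  proof (intro ballI impI)
    fix v w assume "v \<in> F ` X" "w \<in> F ` X" "v \<noteq> w"
    then obtain x y where "x \<in> X" "y \<in> X" "v = F x" "w = F y" "x \<noteq> y" by auto
    then show "1 < nrm (v - w)" using key[of x y] mu by simp
  qed
  fix t i assume "t \<in> F ` X"
  then obtain c f where cf: "c \<in> C" "f \<in> PiE UNIV (\<lambda>_. {..<m})" "t = F (c, f)"
    unfolding X_def by auto
  have fi: "f i < m" using cf(2) by auto
  then have fi': "real (f i) \<le> real m - 1" using m by linarith
  have t: "t $ i = (\<mu>/2) * (c $ i + P * real (f i))" using cf(3) unfolding F_def by simp
  have ci: "0 < c $ i" "c $ i < K" using Cb[OF cf(1)] by auto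
  have "0 \<le> P * real (f i)" using P by simp
  moreover have "P * real (f i) \<le> P * (real m - 1)" using P fi' by (intro mult_left_mono) auto
  ultimately have "0 \<le> c $ i + P * real (f i)" "c $ i + P * real (f i) \<le> real m * P"
    using ci P hN_pos by (auto simp: algebra_simps)
  then have "0 \<le> (\<mu>/2) * (c $ i + P * real (f i))" "(\<mu>/2) * (c $ i + P * real (f i)) \<le> (\<mu>/2) * (real m * P)"
    using mu by (auto intro: mult_left_mono)
  then show "0 \<le> t $ i \<and> t $ i \<le> \<mu> * real m * P / 2" unfolding t by simp
qed

end



context nrm_loc begin

lemma grid_ex:
  assumes "packing K C" "0 < K" "1 \<le> m" "1 < \<mu>"
  shows "\<exists>T. finite T \<and> card T = card C * m ^ CARD('d) \<and> well_spread nrm T \<and>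
    (\<forall>t\<in>T. \<forall>i. 0 \<le> t $ i \<and> t $ i \<le> \<mu> * real m * (K + hN) / 2)"
  using grid[OF assms] by blast

lemma upper_r:
  assumes f: "feasible nrm \<phi>" and K: "0 < K" and q1: "1 < q" and r: "0 \<le> r"
  shows "of_nat (max_packing nrm K) * (\<integral>\<^sup>+x. ennreal (\<phi> x) * indicator (cube (-r) r) x \<partial>lebesgue)
     \<le> ennreal ((q * (K + hN) / 2) ^ CARD('d))"
proof -
  define N where "N = max_packing nrm K"
  define J where "J = (\<integral>\<^sup>+x. ennreal (\<phi> x) * indicator (cube (-r) r) x \<partial>lebesgue)"
  obtain C where C: "packing K C" "card C = N" using N_ex unfolding N_def by blast
  define \<mu> where "\<mu> = (1 + q) / 2"
  define P where "P = K + hN"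
  have mu: "1 < \<mu>" "\<mu> < q" using q1 unfolding \<mu>_def by auto
  have P: "0 < P" unfolding P_def using K hN_pos by simp
  define m where "m = nat \<lceil>4 * r / ((q - \<mu>) * P)\<rceil> + 1"
  have m1: "1 \<le> m" unfolding m_def by simp
  have mr: "4 * r / ((q - \<mu>) * P) \<le> real m" unfolding m_def by linarith
  then have mr': "4 * r \<le> real m * ((q - \<mu>) * P)" using mu P by (simp add: field_simps)
  obtain T where T: "finite T" "card T = N * m ^ CARD('d)" "well_spread nrm T"
      "\<And>t i. t \<in> T \<Longrightarrow> 0 \<le> t $ i \<and> t $ i \<le> \<mu> * real m * P / 2"
    using grid_ex[OF C(1) K m1 mu(1)] C(2) unfolding P_def by blast
  define W where "W = \<mu> * real m * P / 2"
  have W: "0 \<le> W" unfolding W_def using mu P by simp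
  have a1: "of_nat (card T) * J \<le> ennreal ((2*r + W) ^ CARD('d))"
    unfolding J_def by (rule avg[OF f T(1) T(3) _ W r]) (use T(4) in \<open>simp add: W_def\<close>)
  have a2: "(2*r + W) ^ CARD('d) \<le> (real m * (q * P / 2)) ^ CARD('d)"
  proof (rule power_mono)
    have "\<mu> * real m * P + real m * ((q - \<mu>) * P) = real m * (q * P)" by (simp add: algebra_simps)
    then show "2 * r + W \<le> real m * (q * P / 2)" using mr' unfolding W_def by linarith
    show "0 \<le> 2 * r + W" using r W by simp
  qed
  have "of_nat (m ^ CARD('d)) * (of_nat N * J) = of_nat (card T) * J"
    unfolding T(2) by (simp add: ac_simps)
  also have "\<dots> \<le> ennreal ((2*r + W) ^ CARD('d))" by (rule a1)
  also have "\<dots> \<le> ennreal ((real m * (q * P / 2)) ^ CARD('d))" by (rule ennreal_leI[OF a2])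
  also have "(real m * (q * P / 2)) ^ CARD('d) = real (m ^ CARD('d)) * (q * P / 2) ^ CARD('d)"
    by (simp only: power_mult_distrib of_nat_power)
  also have "ennreal \<dots> = of_nat (m ^ CARD('d)) * ennreal ((q * P / 2) ^ CARD('d))"
    using q1 P by (simp add: ennreal_mult ennreal_of_nat_eq_real_of_nat)
  finally have "of_nat (m ^ CARD('d)) * (of_nat N * J) \<le> of_nat (m ^ CARD('d)) * ennreal ((q * P / 2) ^ CARD('d))" .
  then have "of_nat N * J \<le> ennreal ((q * P / 2) ^ CARD('d))"
    using m1 ennreal_of_nat_neq_top[of "m ^ CARD('d)"]
    by (subst (asm) ennreal_mult_le_mult_iff) (auto simp del: of_nat_power)
  then show ?thesis unfolding N_def J_def P_def by (simp add: mult.assoc)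
qed

lemma int_SUP_cubes:
  fixes \<phi> :: "real^'d \<Rightarrow> real"
  assumes f: "\<phi> \<in> borel_measurable lebesgue"
  shows "(\<integral>\<^sup>+x. ennreal (\<phi> x) \<partial>lebesgue)
       = (SUP r::nat. \<integral>\<^sup>+x. ennreal (\<phi> x) * indicator (cube (- real r) (real r)) x \<partial>lebesgue)"
proof -
  let ?f = "\<lambda>(r::nat) x. ennreal (\<phi> x) * indicator (cube (- real r) (real r) :: (real^'d) set) x :: ennreal"
  have inc: "incseq ?f"
  proof (intro monoI le_funI)
    fix r s :: nat and x :: "real^'d" assume "r \<le> s"
    then have rs: "real r \<le> real s" by simp
    have "x \<in> cube (- real r) (real r) \<Longrightarrow> x \<in> cube (- real s) (real s)"
      unfolding mem_cube
    proof (intro allI)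
      fix i assume "\<forall>i. - real r < x $ i \<and> x $ i < real r"
      then have "- real r < x $ i \<and> x $ i < real r" by blast
      then show "- real s < x $ i \<and> x $ i < real s" using rs by linarith
    qed
    then show "?f r x \<le> ?f s x" by (auto simp: indicator_def)
  qed
  have pw: "(SUP r. ?f r x) = ennreal (\<phi> x)" for x
  proof (rule antisym)
    show "(SUP r. ?f r x) \<le> ennreal (\<phi> x)"
      by (rule SUP_least) (auto simp: indicator_def)
    define r0 where "r0 = nat \<lceil>norm x\<rceil> + 1"
    have "x \<in> cube (- real r0) (real r0)"
      unfolding mem_cube
    proof
      fix i
      have "\<bar>x $ i\<bar> \<le> norm x" by (rule component_le_norm_cart)
      moreover have "norm x < real r0" unfolding r0_def by linarith
      ultimately show "- real r0 < x $ i \<and> x $ i < real r0" by linarith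
    qed
    then have "?f r0 x = ennreal (\<phi> x)" by simp
    moreover have "?f r0 x \<le> (SUP r. ?f r x)" by (rule SUP_upper) simp
    ultimately show "ennreal (\<phi> x) \<le> (SUP r. ?f r x)" by simp
  qed
  have "(\<integral>\<^sup>+x. ennreal (\<phi> x) \<partial>lebesgue) = (\<integral>\<^sup>+x. (SUP r. ?f r x) \<partial>lebesgue)"
    by (simp add: pw)
  also have "\<dots> = (SUP r. integral\<^sup>N lebesgue (?f r))"
    by (rule nn_integral_monotone_convergence_SUP[OF inc]) (use f in simp)
  finally show ?thesis .
qed

lemma upper:
  assumes f: "feasible nrm \<phi>" and K: "0 < K" and q1: "1 < q"
  shows "of_nat (max_packing nrm K) * (\<integral>\<^sup>+x. ennreal (\<phi> x) \<partial>lebesgue)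
     \<le> ennreal ((q * (K + hN) / 2) ^ CARD('d))"
proof -
  have fm: "\<phi> \<in> borel_measurable lebesgue" using f unfolding feasible_def by blast
  show ?thesis
    unfolding int_SUP_cubes[OF fm] SUP_mult_left_ennreal
    by (rule SUP_least) (rule upper_r[OF f K q1], simp)
qed

end



context nrm_loc begin

lemma ball_borel: "unit_ball nrm \<in> sets borel"
proof -
  have "open {x. nrm x < (\<lambda>_. 1) x}"
    by (rule open_Collect_less[OF nrm_cont continuous_on_const])
  then show ?thesis unfolding unit_ball_def by simp
qed

lemma vol_pos: "0 < measure lborel (unit_ball nrm)"
proof -
  have sub1: "cube (-epsN) epsN \<subseteq> unit_ball nrm"
  proof
    fix x :: "real^'d" assume x: "x \<in> cube (-epsN) epsN"
    have "0 \<in> cube (-epsN) epsN" using epsN_pos unfolding mem_cube by simp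
    then have "nrm (x - 0) < 1" using small_cube[OF x] by blast
    then show "x \<in> unit_ball nrm" unfolding unit_ball_def by simp
  qed
  define R where "R = 1 / aN + 1"
  have sub2: "unit_ball nrm \<subseteq> cube (-R) R"
  proof
    fix x :: "real^'d" assume "x \<in> unit_ball nrm"
    then have x: "nrm x < 1" unfolding unit_ball_def by simp
    show "x \<in> cube (-R) R" unfolding mem_cube
    proof
      fix i
      have "aN * \<bar>x $ i\<bar> < 1" using nrm_comp[of x i] x by linarith
      then have "\<bar>x $ i\<bar> < 1 / aN" using aN(1) by (simp add: field_simps)
      then show "- R < x $ i \<and> x $ i < R" unfolding R_def by linarith
    qed
  qed
  have "0 < 1 / aN" using aN(1) by simp
  then have R: "0 < R" unfolding R_def by linarith
  have "emeasure lborel (unit_ball nrm) \<le> emeasure lborel (cube (-R) R :: (real^'d) set)"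
    by (rule emeasure_mono[OF sub2]) simp
  also have "emeasure lborel (cube (-R) R :: (real^'d) set) = emeasure lebesgue (cube (-R) R :: (real^'d) set)"
    unfolding cube_def by simp
  also have "\<dots> = ennreal ((R - - R) ^ CARD('d))" using R by (intro emeasure_cube) simp
  finally have fin: "emeasure lborel (unit_ball nrm) \<noteq> top" using ennreal_neq_top top.not_eq_extremum
    by (metis linorder_not_le)
  have "emeasure lebesgue (cube (-epsN) epsN :: (real^'d) set) = emeasure lborel (cube (-epsN) epsN :: (real^'d) set)"
    unfolding cube_def by simp
  also have "\<dots> \<le> emeasure lborel (unit_ball nrm)"
    by (rule emeasure_mono[OF sub1 ball_borel[unfolded sets_lborel[symmetric]]])
  also have "\<dots> = ennreal (measure lborel (unit_ball nrm))" by (rule emeasure_eq_ennreal_measure[OF fin])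
  finally have "ennreal ((epsN - - epsN) ^ CARD('d)) \<le> ennreal (measure lborel (unit_ball nrm))"
    using epsN_pos by (subst (asm) emeasure_cube) auto
  then have "(epsN - - epsN) ^ CARD('d) \<le> measure lborel (unit_ball nrm)"
    by (subst (asm) ennreal_le_iff) auto
  moreover have "0 < (epsN - - epsN) ^ CARD('d)" using epsN_pos by simp
  ultimately show ?thesis by linarith
qed

end


lemma H1:
  fixes A T s Nr V :: real
  assumes "0 < A" "0 < T" "0 < s" "1 \<le> Nr" "0 \<le> V" "A / T / Nr \<le> s"
  shows "V / (T * s) \<le> Nr * V / A"
proof -
  have "A \<le> T * s * Nr" using assms by (simp add: field_simps)
  then have "1 / (T * s) \<le> Nr / A" using assms by (simp add: field_simps)
  then have "V * (1 / (T * s)) \<le> V * (Nr / A)" using assms by (intro mult_left_mono) auto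
  then show ?thesis by (simp add: mult.commute)
qed

lemma H2:
  fixes A T s Nr V Rn :: real
  assumes "0 < A" "0 < T" "0 < s" "0 \<le> V" "Nr * s \<le> A * Rn / T"
  shows "Nr * V / A \<le> V * Rn / (T * s)"
proof -
  have "Nr / A \<le> Rn / (T * s)" using assms by (simp add: field_simps)
  then have "V * (Nr / A) \<le> V * (Rn / (T * s))" using assms by (intro mult_left_mono) auto
  then show ?thesis by (simp add: mult.commute)
qed

lemma lim_R: "((\<lambda>K::real. ((1 + 1/K) * (1 + h/K)) ^ n) \<longlongrightarrow> 1) at_top"
proof -
  have inf: "filterlim (\<lambda>K::real. K) at_infinity at_top"
    by (rule filterlim_at_top_imp_at_infinity[OF filterlim_ident])
  have "((\<lambda>K::real. 1 / K) \<longlongrightarrow> 0) at_top" by (rule tendsto_divide_0[OF tendsto_const inf])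
  moreover have "((\<lambda>K::real. h / K) \<longlongrightarrow> 0) at_top" by (rule tendsto_divide_0[OF tendsto_const inf])
  ultimately have "((\<lambda>K::real. ((1 + 1/K) * (1 + h/K)) ^ n) \<longlongrightarrow> ((1 + 0) * (1 + 0)) ^ n) at_top"
    by (intro tendsto_intros)
  then show ?thesis by simp
qed

context nrm_loc begin

lemma main:
  "sig = ennreal (measure lborel (unit_ball nrm) / (2 ^ CARD('d) * packing_density nrm))"
proof -
  define V where "V = measure lborel (unit_ball nrm)"
  define N where "N = (\<lambda>K. real (max_packing nrm K))"
  have V: "0 < V" unfolding V_def by (rule vol_pos)
  have N1: "1 \<le> N K" if "0 < K" for K unfolding N_def using N_pos[OF that] by simp
  have Nup: "of_nat (max_packing nrm K) * sig \<le> ennreal ((q * (K + hN) / 2) ^ CARD('d))"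
    if K: "0 < K" and q: "1 < q" for K q
    unfolding SUP_mult_left_ennreal
    by (rule SUP_least) (use upper[OF _ K q] in simp)
  have "1 * sig \<le> of_nat (max_packing nrm 1) * sig"
    using N1[of 1] unfolding N_def by (intro mult_right_mono) auto
  also have "\<dots> \<le> ennreal ((2 * (1 + hN) / 2) ^ CARD('d))" by (rule Nup) auto
  finally have le1: "sig \<le> ennreal ((2 * (1 + hN) / 2) ^ CARD('d))" by simp
  have "sig \<noteq> top" by (rule less_imp_neq[OF order.strict_trans1[OF le1 ennreal_less_top]])
  then obtain s where s: "sig = ennreal s" "0 \<le> s" by (cases sig rule: ennreal_cases) auto
  have a: "(K/2) ^ CARD('d) / N K \<le> s" if K: "0 < K" for K
  proof -
    have "ennreal ((K/2) ^ CARD('d) / N K) \<le> ennreal s" using lower[OF K] unfolding s(1) N_def .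
    then show ?thesis using s(2) by simp
  qed
  have b: "N K * s \<le> (q * (K + hN) / 2) ^ CARD('d)" if K: "0 < K" and q: "1 < q" for K q
  proof -
    have "ennreal (N K * s) = of_nat (max_packing nrm K) * sig"
      unfolding s N_def using s(2) by (simp add: ennreal_mult ennreal_of_nat_eq_real_of_nat)
    also have "\<dots> \<le> ennreal ((q * (K + hN) / 2) ^ CARD('d))" by (rule Nup[OF K q])
    finally show ?thesis using K q hN_pos by (subst (asm) ennreal_le_iff) auto
  qed
  have spos: "0 < s"
  proof -
    have "0 < (1/2) ^ CARD('d) / N 1" using N1[of 1] by simp
    with a[of 1] show ?thesis by simp
  qed
  define T where "T = (2::real) ^ CARD('d)"
  have T: "0 < T" unfolding T_def by simp
  have lim: "((\<lambda>K. N K * V / K ^ CARD('d)) \<longlongrightarrow> V / (T * s)) at_top"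
  proof (rule tendsto_sandwich[where f = "\<lambda>_. V / (T * s)"
        and h = "\<lambda>K. V * ((1 + 1/K) * (1 + hN/K)) ^ CARD('d) / (T * s)"])
    show "eventually (\<lambda>K. V / (T * s) \<le> N K * V / K ^ CARD('d)) at_top"
      using eventually_gt_at_top[of "0::real"]
    proof eventually_elim
      case (elim K)
      show ?case
        by (rule H1[OF _ T spos N1[OF elim] less_imp_le[OF V]])
          (use elim a[OF elim] in \<open>auto simp: T_def power_divide\<close>)
    qed
    show "eventually (\<lambda>K. N K * V / K ^ CARD('d) \<le> V * ((1 + 1/K) * (1 + hN/K)) ^ CARD('d) / (T * s)) at_top"
      using eventually_gt_at_top[of "0::real"]
    proof eventually_elim
      case (elim K)
      have eq: "(1 + 1/K) * (K + hN) / 2 = K * ((1 + 1/K) * (1 + hN/K)) / 2"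
        using elim by (simp add: field_simps)
      have "N K * s \<le> ((1 + 1/K) * (K + hN) / 2) ^ CARD('d)"
        by (rule b) (use elim in auto)
      also have "\<dots> = K ^ CARD('d) * ((1 + 1/K) * (1 + hN/K)) ^ CARD('d) / T"
        unfolding eq T_def by (simp add: power_divide power_mult_distrib)
      finally have c: "N K * s \<le> K ^ CARD('d) * ((1 + 1/K) * (1 + hN/K)) ^ CARD('d) / T" .
      show ?case
        by (rule H2[OF _ T spos less_imp_le[OF V] c]) (use elim in simp)
    qed
    show "((\<lambda>_. V / (T * s)) \<longlongrightarrow> V / (T * s)) at_top" by simp
    have "((\<lambda>K. V * ((1 + 1/K) * (1 + hN/K)) ^ CARD('d) / (T * s)) \<longlongrightarrow> V * 1 / (T * s)) at_top"
      by (intro tendsto_intros lim_R) (use T spos in simp)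
    then show "((\<lambda>K. V * ((1 + 1/K) * (1 + hN/K)) ^ CARD('d) / (T * s)) \<longlongrightarrow> V / (T * s)) at_top"
      by simp
  qed
  have pd: "packing_density nrm = V / (T * s)"
    unfolding packing_density_def
    by (rule tendsto_Lim) (use lim in \<open>simp_all add: N_def V_def\<close>)
  have "V / (2 ^ CARD('d) * packing_density nrm) = s"
    unfolding pd using V T spos by (simp add: T_def field_simps)
  then show ?thesis using s(1) unfolding V_def by simp
qed

end


theorem lemma5p3:
  fixes nrm :: "real^'d \<Rightarrow> real"
  assumes "is_norm nrm"
  shows "(SUP \<phi>\<in>{\<phi>. feasible nrm \<phi>}. \<integral>\<^sup>+ x. ennreal (\<phi> x) \<partial>lebesgue)
         = ennreal (measure lborel (unit_ball nrm) / (2 ^ CARD('d) * packing_density nrm))"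
proof -
  interpret nrm_loc nrm by (rule nrm_loc.intro[OF assms])
  show ?thesis by (rule main)
qed

end
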